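(* For integers $M\ge L>N\ge1$, every configuration of the four-vertex model on the $L\times M$ grid with scalar-product boundary conditions has exactly $(L-N)(M-N)$ vertices of type $a$, $N(M-L+N)$ vertices of type $b$ and $2N(L-N)$ vertices of type $c$. Consequently the weighted partition function $\sum_{\text{conf}}a^{\#a}b^{\#b}c^{\#c}$ equals $a^{(L-N)(M-N)}b^{N(M-L+N)}c^{2N(L-N)}Z_{L,M,N}$, with $Z_{L,M,N}$ the number of configurations.
   Context: Four-vertex model: on the grid of vertices $(n,m)$, $1\le n\le L$, $1\le m\le M$, every edge (including boundary edges sticking out of the rectangle) is thick or thin, such that at every vertex the four incident edges form one of four allowed local configurations: type $a$: all thin; type $b$: both vertical edges thick, both horizontal thin; type $c$ (two kinds): south and east thick, west and north thin; or west and north thick, south and east thin. Scalar-product boundary conditions: the south boundary vertical edges in columns $1,\dots,N$ and the north boundary vertical edges in columns $L-N+1,\dots,L$ are thick; all other boundary edges are thin. $\#a,\#b,\#c$ denote the numbers of vertices of each type in a configuration. *)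

theory Defs
  imports Main
begin

text \<open>Vertices (n,m), 1 \<le> n \<le> L (column), 1 \<le> m \<le> M (row).
  A configuration is a pair (V, H) of edge-states (True = thick):
  V n m : vertical edge in column n between rows m and m+1 (0 \<le> m \<le> M;
          m = 0 south boundary, m = M north boundary);
  H n m : horizontal edge in row m between columns n and n+1 (0 \<le> n \<le> L;
          n = 0 west boundary, n = L east boundary).
  Outside these index ranges the functions are required to be False, so that
  configurations are in bijection with edge colourings of the grid.\<close>

type_synonym config = "(nat \<Rightarrow> nat \<Rightarrow> bool) \<times> (nat \<Rightarrow> nat \<Rightarrow> bool)"

definition south :: "config \<Rightarrow> nat \<Rightarrow> nat \<Rightarrow> bool" where
  "south C n m = fst C n (m - 1)"
definition north :: "config \<Rightarrow> nat \<Rightarrow> nat \<Rightarrow> bool" where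
  "north C n m = fst C n m"
definition west :: "config \<Rightarrow> nat \<Rightarrow> nat \<Rightarrow> bool" where
  "west C n m = snd C (n - 1) m"
definition east :: "config \<Rightarrow> nat \<Rightarrow> nat \<Rightarrow> bool" where
  "east C n m = snd C n m"

definition type_a :: "config \<Rightarrow> nat \<Rightarrow> nat \<Rightarrow> bool" where
  "type_a C n m \<longleftrightarrow> \<not> south C n m \<and> \<not> north C n m \<and> \<not> west C n m \<and> \<not> east C n m"
definition type_b :: "config \<Rightarrow> nat \<Rightarrow> nat \<Rightarrow> bool" where
  "type_b C n m \<longleftrightarrow> south C n m \<and> north C n m \<and> \<not> west C n m \<and> \<not> east C n m"
definition type_c :: "config \<Rightarrow> nat \<Rightarrow> nat \<Rightarrow> bool" where
  "type_c C n m \<longleftrightarrow>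
     (south C n m \<and> east C n m \<and> \<not> west C n m \<and> \<not> north C n m) \<or>
     (west C n m \<and> north C n m \<and> \<not> south C n m \<and> \<not> east C n m)"

definition grid :: "nat \<Rightarrow> nat \<Rightarrow> (nat \<times> nat) set" where
  "grid L M = {1..L} \<times> {1..M}"

definition configs :: "nat \<Rightarrow> nat \<Rightarrow> nat \<Rightarrow> config set" where
  "configs L M N = {C.
     (\<forall>n m. fst C n m \<longrightarrow> 1 \<le> n \<and> n \<le> L \<and> m \<le> M) \<and>
     (\<forall>n m. snd C n m \<longrightarrow> n \<le> L \<and> 1 \<le> m \<and> m \<le> M) \<and>
     (\<forall>(n, m) \<in> grid L M. type_a C n m \<or> type_b C n m \<or> type_c C n m) \<and>
     (\<forall>n \<in> {1..L}. fst C n 0 \<longleftrightarrow> n \<le> N) \<and>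
     (\<forall>n \<in> {1..L}. fst C n M \<longleftrightarrow> L - N + 1 \<le> n) \<and>
     (\<forall>m \<in> {1..M}. \<not> snd C 0 m \<and> \<not> snd C L m)}"

definition num_a :: "nat \<Rightarrow> nat \<Rightarrow> config \<Rightarrow> nat" where
  "num_a L M C = card {(n, m) \<in> grid L M. type_a C n m}"
definition num_b :: "nat \<Rightarrow> nat \<Rightarrow> config \<Rightarrow> nat" where
  "num_b L M C = card {(n, m) \<in> grid L M. type_b C n m}"
definition num_c :: "nat \<Rightarrow> nat \<Rightarrow> config \<Rightarrow> nat" where
  "num_c L M C = card {(n, m) \<in> grid L M. type_c C n m}"

definition partition_fn :: "nat \<Rightarrow> nat \<Rightarrow> nat \<Rightarrow> 'a::comm_semiring_1 \<Rightarrow> 'a \<Rightarrow> 'a \<Rightarrow> 'a" where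
  "partition_fn L M N a b c =
     (\<Sum>C \<in> configs L M N. a ^ num_a L M C * b ^ num_b L M C * c ^ num_c L M C)"

end

theory Submission
  imports Defs
begin

lemma vertex_eqs:
  assumes C: "C \<in> configs L M N" and n: "n \<in> {1..L}" and m: "m \<in> {1..M}"
  shows "of_bool (type_a C n m) = (1::int) - of_bool (fst C n (m-1)) - of_bool (snd C (n-1) m)"
    and "of_bool (type_b C n m) = (of_bool (fst C n (m-1)) - of_bool (snd C n m) :: int)"
    and "of_bool (type_c C n m) = (of_bool (snd C (n-1) m) + of_bool (snd C n m) :: int)"
    and "(of_bool (fst C n (m-1)) + of_bool (snd C (n-1) m) :: int)
          = of_bool (fst C n m) + of_bool (snd C n m)"
proof -
  have "type_a C n m \<or> type_b C n m \<or> type_c C n m"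
    using C n m unfolding configs_def grid_def by auto
  then show "of_bool (type_a C n m) = (1::int) - of_bool (fst C n (m-1)) - of_bool (snd C (n-1) m)"
    and "of_bool (type_b C n m) = (of_bool (fst C n (m-1)) - of_bool (snd C n m) :: int)"
    and "of_bool (type_c C n m) = (of_bool (snd C (n-1) m) + of_bool (snd C n m) :: int)"
    and "(of_bool (fst C n (m-1)) + of_bool (snd C (n-1) m) :: int)
          = of_bool (fst C n m) + of_bool (snd C n m)"
    unfolding type_a_def type_b_def type_c_def south_def north_def west_def east_def
    by auto
qed

lemma shift1: "(\<Sum>n\<in>{1..Suc K}. g n) = (\<Sum>k\<in>{0..K}. g (Suc k) :: int)"
  by (induction K) auto

lemma card_sum:
  "int (card {(n, m) \<in> grid L M. P n m}) = (\<Sum>m\<in>{1..M}. \<Sum>n\<in>{1..L}. of_bool (P n m))"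
proof -
  have "int (card {(n, m) \<in> grid L M. P n m}) = (\<Sum>x\<in>{(n, m) \<in> grid L M. P n m}. 1)"
    by simp
  also have "\<dots> = (\<Sum>x\<in>grid L M. if (case x of (n,m) \<Rightarrow> P n m) then 1 else 0)"
  proof -
    have e: "{(n, m) \<in> grid L M. P n m} = {x\<in>grid L M. case x of (n,m) \<Rightarrow> P n m}" by auto
    show ?thesis unfolding e
      by (rule sum.inter_filter) (simp add: grid_def)
  qed
  also have "\<dots> = (\<Sum>(n,m)\<in>{1..L} \<times> {1..M}. of_bool (P n m))"
    unfolding grid_def by (intro sum.cong) auto
  also have "\<dots> = (\<Sum>n\<in>{1..L}. \<Sum>m\<in>{1..M}. of_bool (P n m))"
    by (rule sum.cartesian_product[symmetric])
  also have "\<dots> = (\<Sum>m\<in>{1..M}. \<Sum>n\<in>{1..L}. of_bool (P n m))"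
    by (rule sum.swap)
  finally show ?thesis .
qed

lemma filt_sum:
  fixes N L :: nat
  assumes "N \<le> L"
  shows "(\<Sum>n\<in>{1..L}. of_bool (n \<le> N) * g n) = (\<Sum>n\<in>{1..N}. g n :: int)"
proof -
  have "{1..N} = {n\<in>{1..L}. n \<le> N}" using assms by (intro set_eqI) (simp, linarith)
  then have "(\<Sum>n\<in>{1..N}. g n) = (\<Sum>n\<in>{1..L}. if n \<le> N then g n else 0)"
    by (simp only:) (rule sum.inter_filter, simp)
  then show ?thesis by (simp only:) (rule sum.cong, simp_all)
qed

lemma filt_sum2:
  fixes N L :: nat
  assumes "N \<le> L"
  shows "(\<Sum>n\<in>{1..L}. of_bool (L - N + 1 \<le> n) * g n) = (\<Sum>n\<in>{L-N+1..L}. g n :: int)"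
proof -
  have "{L-N+1..L} = {n\<in>{1..L}. L - N + 1 \<le> n}" using assms by (intro set_eqI) (simp, linarith)
  then have "(\<Sum>n\<in>{L-N+1..L}. g n) = (\<Sum>n\<in>{1..L}. if L - N + 1 \<le> n then g n else 0)"
    by (simp only:) (rule sum.inter_filter, simp)
  then show ?thesis by (simp only:) (rule sum.cong, simp_all)
qed

lemma gauss_diff:
  fixes N L :: nat
  assumes "N \<le> L"
  shows "(\<Sum>n\<in>{L-N+1..L}. int n) - (\<Sum>n\<in>{1..N}. int n) = int N * (int L - int N)"
proof -
  have img: "{L-N+1..L} = (\<lambda>n. n + (L - N)) ` {1..N}"
  proof
    show "{L-N+1..L} \<subseteq> (\<lambda>n. n + (L - N)) ` {1..N}"
    proof
      fix x assume "x \<in> {L-N+1..L}"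
      then have "x = (x - (L-N)) + (L - N)" "x - (L-N) \<in> {1..N}" using assms by auto
      then show "x \<in> (\<lambda>n. n + (L - N)) ` {1..N}" by blast
    qed
  qed (use assms in auto)
  have "(\<Sum>n\<in>{L-N+1..L}. int n) = (\<Sum>n\<in>{1..N}. int (n + (L - N)))"
    unfolding img by (subst sum.reindex) (auto simp: inj_on_def)
  also have "\<dots> = (\<Sum>n\<in>{1..N}. int n) + int N * int (L - N)"
    by (simp add: sum.distrib)
  finally show ?thesis using assms by (simp add: of_nat_diff)
qed

lemma counts:
  fixes L M N :: nat
  assumes C: "C \<in> configs L M N" and N1: "1 \<le> N" and NL: "N < L" and LM: "L \<le> M"
  shows "int (num_a L M C) = (int L - int N) * (int M - int N)"
    and "int (num_b L M C) = int N * (int M - int L + int N)"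
    and "int (num_c L M C) = 2 * int N * (int L - int N)"
proof -
  define S where "S k = (\<Sum>n\<in>{1..L}. of_bool (fst C n k) :: int)" for k
  define h where "h m = (\<Sum>k\<in>{0..L}. of_bool (snd C k m) :: int)" for m
  define P where "P k = (\<Sum>n\<in>{1..L}. int n * of_bool (fst C n k))" for k
  obtain K where LK: "L = Suc K" using NL by (cases L) auto
  have bd: "\<not> snd C 0 m" "\<not> snd C L m" if "m \<in> {1..M}" for m
    using C that unfolding configs_def by auto
  have bot: "fst C n 0 \<longleftrightarrow> n \<le> N" if "n \<in> {1..L}" for n
    using C that unfolding configs_def by auto
  have top: "fst C n M \<longleftrightarrow> L - N + 1 \<le> n" if "n \<in> {1..L}" for n
    using C that unfolding configs_def by auto
  have west: "(\<Sum>n\<in>{1..L}. of_bool (snd C (n-1) m)) = h m" if m: "m \<in> {1..M}" for m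
  proof -
    have "(\<Sum>n\<in>{1..L}. of_bool (snd C (n-1) m)) = (\<Sum>k\<in>{0..K}. of_bool (snd C k m) :: int)"
      unfolding LK by (subst shift1) simp
    also have "\<dots> = h m" unfolding h_def LK using bd(2)[OF m] LK by simp
    finally show ?thesis .
  qed
  have east: "(\<Sum>n\<in>{1..L}. of_bool (snd C n m)) = h m" if m: "m \<in> {1..M}" for m
  proof -
    have "h m = of_bool (snd C 0 m) + (\<Sum>k\<in>{Suc 0..L}. of_bool (snd C k m))"
      unfolding h_def by (rule sum.atLeast_Suc_atMost) simp
    then show ?thesis using bd(1)[OF m] by simp
  qed
  have westw: "(\<Sum>n\<in>{1..L}. int n * of_bool (snd C (n-1) m))
      = (\<Sum>k\<in>{0..L}. (int k + 1) * of_bool (snd C k m))" if m: "m \<in> {1..M}" for m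
  proof -
    have "(\<Sum>n\<in>{1..L}. int n * of_bool (snd C (n-1) m))
        = (\<Sum>k\<in>{0..K}. (int k + 1) * of_bool (snd C k m))"
      unfolding LK by (subst shift1) (simp add: add.commute)
    also have "\<dots> = (\<Sum>k\<in>{0..L}. (int k + 1) * of_bool (snd C k m))"
      unfolding LK using bd(2)[OF m] LK by simp
    finally show ?thesis .
  qed
  have eastw: "(\<Sum>n\<in>{1..L}. int n * of_bool (snd C n m))
      = (\<Sum>k\<in>{0..L}. int k * of_bool (snd C k m))" for m
  proof -
    have "(\<Sum>k\<in>{0..L}. int k * of_bool (snd C k m)) = int 0 * of_bool (snd C 0 m)
        + (\<Sum>k\<in>{Suc 0..L}. int k * of_bool (snd C k m))"
      by (rule sum.atLeast_Suc_atMost) simp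
    then show ?thesis by simp
  qed
  have hdiff: "(\<Sum>n\<in>{1..L}. int n * of_bool (snd C (n-1) m))
      - (\<Sum>n\<in>{1..L}. int n * of_bool (snd C n m)) = h m" if m: "m \<in> {1..M}" for m
    unfolding westw[OF m] eastw h_def
    by (simp only: sum_subtractf[symmetric]) (rule sum.cong, simp_all add: algebra_simps)
  have flux: "S (m-1) = S m" if m: "m \<in> {1..M}" for m
  proof -
    have "(\<Sum>n\<in>{1..L}. of_bool (fst C n (m-1)) + of_bool (snd C (n-1) m) :: int)
        = (\<Sum>n\<in>{1..L}. of_bool (fst C n m) + of_bool (snd C n m))"
      by (rule sum.cong) (use vertex_eqs(4)[OF C _ m] in auto)
    then show ?thesis unfolding S_def using west[OF m] east[OF m] by (simp add: sum.distrib)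
  qed
  have fluxw: "P m = P (m-1) + h m" if m: "m \<in> {1..M}" for m
  proof -
    have "(\<Sum>n\<in>{1..L}. int n * (of_bool (fst C n (m-1)) + of_bool (snd C (n-1) m)))
        = (\<Sum>n\<in>{1..L}. int n * (of_bool (fst C n m) + of_bool (snd C n m)))"
      by (rule sum.cong) (use vertex_eqs(4)[OF C _ m] in auto)
    then have "P (m-1) + (\<Sum>n\<in>{1..L}. int n * of_bool (snd C (n-1) m))
        = P m + (\<Sum>n\<in>{1..L}. int n * of_bool (snd C n m))"
      unfolding P_def by (simp add: sum.distrib distrib_left)
    then show ?thesis using hdiff[OF m] by simp
  qed
  have S0: "S 0 = int N"
  proof -
    have "S 0 = (\<Sum>n\<in>{1..L}. of_bool (n \<le> N) * 1)"
      unfolding S_def by (rule sum.cong) (auto simp: bot)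
    also have "\<dots> = (\<Sum>n\<in>{1..N}. 1)" using NL by (intro filt_sum) simp
    finally show ?thesis by simp
  qed
  have Sm: "j \<le> M \<Longrightarrow> S j = int N" for j
  proof (induction j)
    case 0 then show ?case using S0 by simp
  next
    case (Suc j)
    then show ?case using flux[of "Suc j"] by simp
  qed
  have P0: "P 0 = (\<Sum>n\<in>{1..N}. int n)"
  proof -
    have "P 0 = (\<Sum>n\<in>{1..L}. of_bool (n \<le> N) * int n)"
      unfolding P_def by (rule sum.cong) (auto simp: bot)
    also have "\<dots> = (\<Sum>n\<in>{1..N}. int n)" using NL by (intro filt_sum) simp
    finally show ?thesis .
  qed
  have PM: "P M = (\<Sum>n\<in>{L-N+1..L}. int n)"
  proof -
    have "P M = (\<Sum>n\<in>{1..L}. of_bool (L - N + 1 \<le> n) * int n)"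
      unfolding P_def by (rule sum.cong) (auto simp: top)
    also have "\<dots> = (\<Sum>n\<in>{L-N+1..L}. int n)" using NL by (intro filt_sum2) simp
    finally show ?thesis .
  qed
  have tele: "j \<le> M \<Longrightarrow> (\<Sum>m\<in>{1..j}. h m) = P j - P 0" for j
  proof (induction j)
    case 0 then show ?case by simp
  next
    case (Suc j)
    then show ?case using fluxw[of "Suc j"] by simp
  qed
  have Hsum: "(\<Sum>m\<in>{1..M}. h m) = int N * (int L - int N)"
    using tele[of M] P0 PM gauss_diff[of N L] NL by simp
  have rowa: "(\<Sum>n\<in>{1..L}. of_bool (type_a C n m)) = int L - int N - h m" if m: "m \<in> {1..M}" for m
  proof -
    have "(\<Sum>n\<in>{1..L}. of_bool (type_a C n m))
       = (\<Sum>n\<in>{1..L}. (1::int) - of_bool (fst C n (m-1)) - of_bool (snd C (n-1) m))"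
      by (rule sum.cong) (use vertex_eqs(1)[OF C _ m] in auto)
    also have "\<dots> = int L - S (m-1) - h m"
      unfolding S_def using west[OF m] by (simp add: sum_subtractf)
    moreover have "S (m-1) = int N" using m by (intro Sm) auto
    ultimately show ?thesis by simp
  qed
  have rowb: "(\<Sum>n\<in>{1..L}. of_bool (type_b C n m)) = int N - h m" if m: "m \<in> {1..M}" for m
  proof -
    have "(\<Sum>n\<in>{1..L}. of_bool (type_b C n m))
       = (\<Sum>n\<in>{1..L}. of_bool (fst C n (m-1)) - of_bool (snd C n m) :: int)"
      by (rule sum.cong) (use vertex_eqs(2)[OF C _ m] in auto)
    also have "\<dots> = S (m-1) - h m"
      unfolding S_def using east[OF m] by (simp add: sum_subtractf)
    moreover have "S (m-1) = int N" using m by (intro Sm) auto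
    ultimately show ?thesis by simp
  qed
  have rowc: "(\<Sum>n\<in>{1..L}. of_bool (type_c C n m)) = 2 * h m" if m: "m \<in> {1..M}" for m
  proof -
    have "(\<Sum>n\<in>{1..L}. of_bool (type_c C n m))
       = (\<Sum>n\<in>{1..L}. of_bool (snd C (n-1) m) + of_bool (snd C n m) :: int)"
      by (rule sum.cong) (use vertex_eqs(3)[OF C _ m] in auto)
    also have "\<dots> = 2 * h m"
      using west[OF m] east[OF m] by (simp add: sum.distrib)
    finally show ?thesis .
  qed
  have "int (num_a L M C) = (\<Sum>m\<in>{1..M}. int L - int N - h m)"
    unfolding num_a_def card_sum by (intro sum.cong refl rowa) auto
  also have "\<dots> = int M * (int L - int N) - int N * (int L - int N)"
    using Hsum by (simp add: sum_subtractf)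
  finally show "int (num_a L M C) = (int L - int N) * (int M - int N)"
    by (simp add: algebra_simps)
  have "int (num_b L M C) = (\<Sum>m\<in>{1..M}. int N - h m)"
    unfolding num_b_def card_sum by (intro sum.cong refl rowb) auto
  also have "\<dots> = int M * int N - int N * (int L - int N)"
    using Hsum by (simp add: sum_subtractf)
  finally show "int (num_b L M C) = int N * (int M - int L + int N)"
    by (simp add: algebra_simps)
  have "int (num_c L M C) = (\<Sum>m\<in>{1..M}. 2 * h m)"
    unfolding num_c_def card_sum by (intro sum.cong refl rowc) auto
  also have "\<dots> = 2 * (int N * (int L - int N))"
    using Hsum by (simp add: sum_distrib_left[symmetric])
  finally show "int (num_c L M C) = 2 * int N * (int L - int N)"
    by (simp add: algebra_simps)
qed

theorem mainTheorem4:
  fixes L M N :: nat and a b c :: "'a::comm_semiring_1"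
  assumes "1 \<le> N" and "N < L" and "L \<le> M"
  shows "(\<forall>C \<in> configs L M N.
            num_a L M C = (L - N) * (M - N) \<and>
            num_b L M C = N * (M - L + N) \<and>
            num_c L M C = 2 * N * (L - N)) \<and>
         partition_fn L M N a b c =
           a ^ ((L - N) * (M - N)) * b ^ (N * (M - L + N)) * c ^ (2 * N * (L - N))
             * of_nat (card (configs L M N))"
proof -
  have A: "\<forall>C \<in> configs L M N.
            num_a L M C = (L - N) * (M - N) \<and>
            num_b L M C = N * (M - L + N) \<and>
            num_c L M C = 2 * N * (L - N)"
  proof
    fix C assume C: "C \<in> configs L M N"
    note cs = counts[OF C assms]
    have "int (num_a L M C) = int ((L - N) * (M - N))"
      using cs(1) assms by (simp add: of_nat_diff)
    moreover have "int (num_b L M C) = int (N * (M - L + N))"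
      using cs(2) assms by (simp add: of_nat_diff)
    moreover have "int (num_c L M C) = int (2 * N * (L - N))"
      using cs(3) assms by (simp add: of_nat_diff)
    ultimately show "num_a L M C = (L - N) * (M - N) \<and>
            num_b L M C = N * (M - L + N) \<and>
            num_c L M C = 2 * N * (L - N)" by linarith
  qed
  have "partition_fn L M N a b c = (\<Sum>C \<in> configs L M N.
      a ^ ((L - N) * (M - N)) * b ^ (N * (M - L + N)) * c ^ (2 * N * (L - N)))"
    unfolding partition_fn_def by (rule sum.cong) (use A in auto)
  also have "\<dots> = a ^ ((L - N) * (M - N)) * b ^ (N * (M - L + N)) * c ^ (2 * N * (L - N))
             * of_nat (card (configs L M N))"
    by (simp add: mult.commute)
  finally show ?thesis using A by blast
qed

end
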